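(* Let $n\ge2$ and suppose $(y,z)$ is a $C^1$ solution with $y,z>0$ on $[0,\infty)$ of \[\dot y=z^2(n+1-y)-ny,\qquad \dot z=\tfrac{n+1}{n}z(n-1+y)-(n+z^2)z,\] such that $(y,z)\to(0,0)$ as $t\to\infty$. Then $\dfrac{z^2}{y}\to\dfrac{n^2-2}{n(n+1)}$ as $t\to\infty$. *)

theory Defs
  imports "HOL-Analysis.Analysis"
begin

end

theory Submission
  imports Defs
begin

lemma eventually_le_of_deriv:
  fixes f f' :: "real \<Rightarrow> real"
  assumes der: "\<And>t. t \<ge> T \<Longrightarrow> (f has_real_derivative f' t) (at t)"
    and c: "c > 0"
    and bnd: "\<And>t. t \<ge> T \<Longrightarrow> f t \<ge> \<eta> \<Longrightarrow> f' t \<le> - c"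
  shows "\<exists>T'. \<forall>t\<ge>T'. f t \<le> \<eta>"
proof -
  have "\<exists>t1\<ge>T. f t1 \<le> \<eta>"
  proof (rule ccontr)
    assume "\<not> ?thesis"
    hence gt: "\<And>t. t \<ge> T \<Longrightarrow> f t > \<eta>" by force
    define t where "t = T + \<bar>f T - \<eta>\<bar> / c + 1"
    have tT: "T < t" using c by (simp add: t_def add_nonneg_pos)
    obtain w where w: "w > T" "w < t" "f t - f T = (t - T) * f' w"
      using MVT2[OF tT, of f f'] der by auto
    have "f' w \<le> - c" using bnd[of w] gt[of w] w by auto
    hence "(t - T) * f' w \<le> (t - T) * (-c)" using tT by (intro mult_left_mono) auto
    also have "(t - T) * (-c) = - \<bar>f T - \<eta>\<bar> - c" using c by (simp add: t_def field_simps)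
    finally have "f t < \<eta>" using w(3) c by linarith
    thus False using gt[of t] tT by auto
  qed
  then obtain t1 where t1: "t1 \<ge> T" "f t1 \<le> \<eta>" by blast
  have "\<forall>t\<ge>t1. f t \<le> \<eta>"
  proof (intro allI impI, rule ccontr)
    fix t assume tt: "t \<ge> t1" and nt: "\<not> f t \<le> \<eta>"
    define S where "S = {t1..t} \<inter> f -` {..\<eta>}"
    have cont: "continuous_on {t1..t} f"
      proof (intro continuous_at_imp_continuous_on ballI)
      fix x assume "x \<in> {t1..t}"
      thus "isCont f x" using der[of x] t1 by (intro DERIV_isCont) auto
    qed
    have cl: "closed S" unfolding S_def by (rule continuous_closed_preimage[OF cont]) auto
    have ne: "S \<noteq> {}" using t1 tt unfolding S_def by auto
    have bd: "bdd_above S" unfolding S_def by (rule bdd_aboveI[of _ t]) auto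
    define s0 where "s0 = Sup S"
    have s0S: "s0 \<in> S" unfolding s0_def by (rule closed_contains_Sup[OF ne bd cl])
    hence s0: "t1 \<le> s0" "s0 \<le> t" "f s0 \<le> \<eta>" unfolding S_def by auto
    have "s0 \<noteq> t" using s0 nt by auto
    hence lt: "s0 < t" using s0 by auto
    obtain w where w: "w > s0" "w < t" "f t - f s0 = (t - s0) * f' w"
      using MVT2[OF lt, of f f'] der s0 t1 by auto
    have "w \<notin> S" using cSup_upper[of w S] bd w unfolding s0_def by force
    hence "f w > \<eta>" using w s0 unfolding S_def by auto
    hence "f' w \<le> -c" using bnd[of w] w s0 t1 by auto
    hence "(t - s0) * f' w \<le> (t - s0) * (-c)" using lt by (intro mult_left_mono) auto
    moreover have "(t - s0) * (-c) < 0" using lt c by (simp add: mult_pos_pos)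
    ultimately show False using w(3) s0 nt by linarith
  qed
  thus ?thesis by blast
qed

lemma tendsto_linear_ode:
  fixes v v' p q :: "real \<Rightarrow> real"
  assumes der: "\<And>t. t \<ge> T \<Longrightarrow> (v has_real_derivative v' t) (at t)"
    and eq: "\<And>t. t \<ge> T \<Longrightarrow> v' t = p t - q t * v t"
    and p: "(p \<longlongrightarrow> P) at_top" and q: "(q \<longlongrightarrow> Q) at_top" and Q: "Q > 0"
  shows "(v \<longlongrightarrow> P / Q) at_top"
proof (rule tendstoI)
  fix \<epsilon> :: real assume \<epsilon>: "\<epsilon> > 0"
  define e where "e = \<epsilon> / 2"
  have e: "e > 0" using \<epsilon> by (simp add: e_def)
  have Qe: "Q * e > 0" using Q e by simp
  define m where "m = P / Q + e"
  define m2 where "m2 = P / Q - e"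
  have l1: "((\<lambda>t. p t - q t * m) \<longlongrightarrow> P - Q * m) at_top"
    by (intro tendsto_intros p q)
  have "P - Q * m = - (Q * e)" using Q by (simp add: m_def field_simps)
  hence ev1: "eventually (\<lambda>t. p t - q t * m < - (Q * e / 2)) at_top"
    using order_tendstoD(2)[OF l1, of "- (Q * e / 2)"] Qe by simp
  have l2: "((\<lambda>t. p t - q t * m2) \<longlongrightarrow> P - Q * m2) at_top"
    by (intro tendsto_intros p q)
  have "P - Q * m2 = Q * e" using Q by (simp add: m2_def field_simps)
  hence ev2: "eventually (\<lambda>t. p t - q t * m2 > Q * e / 2) at_top"
    using order_tendstoD(1)[OF l2, of "Q * e / 2"] Qe by simp
  have ev3: "eventually (\<lambda>t. q t > 0) at_top" using order_tendstoD(1)[OF q Q] .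
  have ev4: "eventually (\<lambda>t. t \<ge> T) at_top" by (rule eventually_ge_at_top)
  obtain T1 where T1: "\<And>t. t \<ge> T1 \<Longrightarrow> p t - q t * m < - (Q * e / 2) \<and>
      p t - q t * m2 > Q * e / 2 \<and> q t > 0 \<and> t \<ge> T"
    using eventually_conj[OF ev1 eventually_conj[OF ev2 eventually_conj[OF ev3 ev4]]]
    unfolding eventually_at_top_linorder by blast
  have "\<exists>T'. \<forall>t\<ge>T'. v t \<le> m"
  proof (rule eventually_le_of_deriv[of T1 v v' "Q * e / 2"])
    show "\<And>t. T1 \<le> t \<Longrightarrow> (v has_real_derivative v' t) (at t)" using der T1 by blast
    show "0 < Q * e / 2" using Qe by simp
    fix t assume t: "T1 \<le> t" "m \<le> v t"
    have "q t * m \<le> q t * v t" using T1[OF t(1)] t(2) by (intro mult_left_mono) auto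
    thus "v' t \<le> - (Q * e / 2)" using eq[of t] T1[OF t(1)] by linarith
  qed
  then obtain Ta where Ta: "\<And>t. t \<ge> Ta \<Longrightarrow> v t \<le> m" by blast
  have "\<exists>T'. \<forall>t\<ge>T'. - v t \<le> - m2"
  proof (rule eventually_le_of_deriv[of T1 "\<lambda>t. - v t" "\<lambda>t. - v' t" "Q * e / 2"])
    show "\<And>t. T1 \<le> t \<Longrightarrow> ((\<lambda>t. - v t) has_real_derivative - v' t) (at t)"
      using der T1 by (blast intro: DERIV_minus)
    show "0 < Q * e / 2" using Qe by simp
    fix t assume t: "T1 \<le> t" "- m2 \<le> - v t"
    have "q t * v t \<le> q t * m2" using T1[OF t(1)] t(2) by (intro mult_left_mono) auto
    thus "- v' t \<le> - (Q * e / 2)" using eq[of t] T1[OF t(1)] by linarith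
  qed
  then obtain Tb where Tb: "\<And>t. t \<ge> Tb \<Longrightarrow> - v t \<le> - m2" by blast
  show "eventually (\<lambda>t. dist (v t) (P / Q) < \<epsilon>) at_top"
    unfolding eventually_at_top_linorder
  proof (intro exI[of _ "max Ta Tb"] allI impI)
    fix t assume "t \<ge> max Ta Tb"
    hence "v t \<le> m" "- v t \<le> - m2" using Ta Tb by auto
    thus "dist (v t) (P / Q) < \<epsilon>" unfolding dist_real_def m_def m2_def e_def using \<epsilon>
      by (simp add: abs_less_iff)
  qed
qed

theorem lemma3p8:
  fixes n :: nat and y z y' z' :: "real \<Rightarrow> real"
  assumes n2: "n \<ge> 2"
    and dy: "\<And>t. t \<ge> 0 \<Longrightarrow> (y has_real_derivative y' t) (at t within {0..})"
    and dz: "\<And>t. t \<ge> 0 \<Longrightarrow> (z has_real_derivative z' t) (at t within {0..})"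
    and cy': "continuous_on {0..} y'"
    and cz': "continuous_on {0..} z'"
    and ypos: "\<And>t. t \<ge> 0 \<Longrightarrow> y t > 0"
    and zpos: "\<And>t. t \<ge> 0 \<Longrightarrow> z t > 0"
    and ode_y: "\<And>t. t \<ge> 0 \<Longrightarrow> y' t = (z t)\<^sup>2 * (real n + 1 - y t) - real n * y t"
    and ode_z: "\<And>t. t \<ge> 0 \<Longrightarrow>
       z' t = (real n + 1) / real n * z t * (real n - 1 + y t) - (real n + (z t)\<^sup>2) * z t"
    and ylim: "(y \<longlongrightarrow> 0) at_top"
    and zlim: "(z \<longlongrightarrow> 0) at_top"
  shows "((\<lambda>t. (z t)\<^sup>2 / y t) \<longlongrightarrow> (real n ^ 2 - 2) / (real n * (real n + 1))) at_top"
proof -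
  define N where "N = real n"
  have N2: "N \<ge> 2" using n2 by (simp add: N_def)
  have at_eq: "\<And>t::real. t \<ge> 1 \<Longrightarrow> at t within {0..} = at t"
    by (rule at_within_interior) auto
  define v where "v = (\<lambda>t. y t / (z t)\<^sup>2)"
  define v' where "v' = (\<lambda>t. (y' t * (z t)\<^sup>2 - y t * (2 * z t * z' t)) / ((z t)\<^sup>2 * (z t)\<^sup>2))"
  define p where "p = (\<lambda>t. N + 1 - y t)"
  define q where "q = (\<lambda>t. (N^2 - 2) / N + 2 * (N + 1) * y t / N - 2 * (z t)\<^sup>2)"
  have der: "(v has_real_derivative v' t) (at t)" if t: "t \<ge> 1" for t
  proof -
    have y1: "(y has_real_derivative y' t) (at t)" using dy[of t] at_eq[OF t] t by simp
    have z1: "(z has_real_derivative z' t) (at t)" using dz[of t] at_eq[OF t] t by simp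
    have z2: "((\<lambda>t. (z t)\<^sup>2) has_real_derivative 2 * z t * z' t) (at t)"
      using DERIV_power[OF z1, of 2] by (simp add: algebra_simps)
    have "z t \<noteq> 0" using zpos[of t] t by simp
    hence "(z t)\<^sup>2 \<noteq> 0" by simp
    from DERIV_divide[OF y1 z2 this] show ?thesis unfolding v_def v'_def by (simp add: power2_eq_square)
  qed
  have eq: "v' t = p t - q t * v t" if t: "t \<ge> 1" for t
  proof -
    have zt: "z t \<noteq> 0" using zpos[of t] t by simp
    have N0: "N \<noteq> 0" using N2 by simp
    show ?thesis unfolding v'_def v_def p_def q_def
      unfolding ode_y[OF order_trans[OF zero_le_one t]] ode_z[OF order_trans[OF zero_le_one t]]
        N_def[symmetric]
      using zt N0 by (simp add: field_simps power2_eq_square)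
  qed
  have pl: "(p \<longlongrightarrow> N + 1 - 0) at_top" unfolding p_def by (intro tendsto_intros ylim)
  have ql: "(q \<longlongrightarrow> (N^2 - 2) / N + 2 * (N + 1) * 0 / N - 2 * 0\<^sup>2) at_top"
    unfolding q_def using N2 by (intro tendsto_intros ylim zlim) auto
  have Qpos: "(N^2 - 2) / N > 0"
  proof -
    have "N^2 \<ge> 2 * 2" using N2 by (metis power2_eq_square mult_mono order_trans N2 zero_le_numeral zero_le_numeral)
    thus ?thesis using N2 by simp
  qed
  have vl: "(v \<longlongrightarrow> (N + 1) / ((N^2 - 2) / N)) at_top"
    using tendsto_linear_ode[OF der eq pl[simplified] ql[simplified] Qpos] by simp
  have "((\<lambda>t. inverse (v t)) \<longlongrightarrow> inverse ((N + 1) / ((N^2 - 2) / N))) at_top"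
    using N2 Qpos by (intro tendsto_inverse vl) auto
  moreover have "inverse ((N + 1) / ((N^2 - 2) / N)) = (real n ^ 2 - 2) / (real n * (real n + 1))"
    unfolding N_def by (simp add: field_simps)
  moreover have "(\<lambda>t. inverse (v t)) = (\<lambda>t. (z t)\<^sup>2 / y t)"
    unfolding v_def by (simp add: fun_eq_iff)
  ultimately show ?thesis by simp
qed

end
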